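(* Let $\mathrm{M}=\langle e_1+I,\ e_2+I\rangle$ and let $$A=\begin{pmatrix}-1&0\\0&1\end{pmatrix},\quad B=\begin{pmatrix}-1&1\\0&1\end{pmatrix},\quad C=\begin{pmatrix}0&1\\1&0\end{pmatrix}.$$ Let $\kappa=(k+K)_\star$ be an element of $\mathrm{Aff}(\mathrm{M})$ such that $K$ has finite order. Then $K$ is conjugate in $\mathrm{GL}(2,\mathbb Z)$ to exactly one of $I,-I,A,C,(BC)^2,AC$ or $BC$. Moreover, with conjugacy of $\kappa$ taken in $\mathrm{Aff}(\mathrm{M})$: (1) If $K=I$ and $\kappa$ has order 2, then $\kappa\in\mathrm{K}_2$ and $\kappa$ is conjugate to $(e_1/2+I)_\star$, where $\mathrm{K}_2=\{I_\star,(e_1/2+I)_\star,(e_2/2+I)_\star,(e_1/2+e_2/2+I)_\star\}$. (2) If $K=-I$, then $\kappa$ is conjugate to $(-I)_\star$. (3) If $K$ is conjugate to $A$ and $\kappa$ has order 2, then $\kappa$ is conjugate to exactly one of $A_\star$ or $(e_2/2+A)_\star$. (4) If $K$ is conjugate to $C$ and $\kappa$ has order 2, then $\kappa$ is conjugate to $C_\star$. (5) If $K$ is conjugate to $(BC)^2$, then $\kappa$ is conjugate to $((BC)^2)_\star$. (6) If $K$ is conjugate to $AC$, then $\kappa$ is conjugate to $(AC)_\star$. (7) If $K$ is conjugate to $BC$, then $\kappa$ is conjugate to $(BC)_\star$.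
   Context: $e_1,e_2$ are the standard basis vectors of $E^2$. Affine maps of $E^2$ are written $a+A$ ($x\mapsto a+Ax$); $a+I$ is translation by $a$. The normalizer $N_A(\mathrm{M})$ of $\mathrm{M}$ in the affine group of $E^2$ consists of all $a+A$ with $a\in E^2$, $A\in\mathrm{GL}(2,\mathbb Z)$. Each $a+A\in N_A(\mathrm{M})$ induces an affinity $(a+A)_\star:\mathrm{M}x\mapsto\mathrm{M}(a+Ax)$ of the torus $E^2/\mathrm{M}$; $\mathrm{Aff}(\mathrm{M})$ is the group of all such affinities, and the linear part $K$ of $\kappa=(k+K)_\star$ is well defined. *)

theory Defs
  imports "HOL-Analysis.Analysis"
begin

text \<open>The translation lattice M = <e1+I, e2+I>, i.e. the integer points of E^2.\<close>
definition latt :: "(real^2) set" where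
  "latt = {z. \<forall>i. z $ i \<in> \<int>}"

text \<open>The point M x of the torus E^2/M, represented as the coset x + Z^2.\<close>
definition tpt :: "real^2 \<Rightarrow> (real^2) set" where
  "tpt x = {x + z | z. z \<in> latt}"

definition torus :: "(real^2) set set" where
  "torus = range tpt"

definition int_matrix :: "real^2^2 \<Rightarrow> bool" where
  "int_matrix A \<longleftrightarrow> (\<forall>i j. A $ i $ j \<in> \<int>)"

definition GL2Z :: "real^2^2 \<Rightarrow> bool" where
  "GL2Z A \<longleftrightarrow> int_matrix A \<and> invertible A \<and> int_matrix (matrix_inv A)"

text \<open>The induced affinity (a+A)_* : M x \<mapsto> M (a + A x) of the torus.\<close>
definition aff_star :: "real^2 \<Rightarrow> real^2^2 \<Rightarrow> (real^2) set \<Rightarrow> (real^2) set" where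
  "aff_star a A = restrict (\<lambda>p. tpt (a + A *v (SOME x. x \<in> p))) torus"

definition Aff :: "((real^2) set \<Rightarrow> (real^2) set) set" where
  "Aff = {aff_star a A | a A. GL2Z A}"

definition aff_conj :: "((real^2) set \<Rightarrow> (real^2) set) \<Rightarrow> ((real^2) set \<Rightarrow> (real^2) set) \<Rightarrow> bool" where
  "aff_conj \<kappa> \<phi> \<longleftrightarrow> (\<exists>\<psi> \<psi>'. \<psi> \<in> Aff \<and> \<psi>' \<in> Aff \<and>
      (\<forall>p\<in>torus. \<psi>' (\<psi> p) = p \<and> \<psi> (\<psi>' p) = p) \<and>
      (\<forall>p\<in>torus. \<kappa> p = \<psi> (\<phi> (\<psi>' p))))"

definition aff_order2 :: "((real^2) set \<Rightarrow> (real^2) set) \<Rightarrow> bool" where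
  "aff_order2 \<kappa> \<longleftrightarrow> (\<forall>p\<in>torus. \<kappa> (\<kappa> p) = p) \<and> \<not> (\<forall>p\<in>torus. \<kappa> p = p)"

definition mat_conj :: "real^2^2 \<Rightarrow> real^2^2 \<Rightarrow> bool" where
  "mat_conj K X \<longleftrightarrow> (\<exists>P. GL2Z P \<and> K = P ** X ** matrix_inv P)"

definition mpow :: "real^2^2 \<Rightarrow> nat \<Rightarrow> real^2^2" where
  "mpow K n = (((**) K) ^^ n) (mat 1)"

definition e1 :: "real^2" where "e1 = axis 1 1"
definition e2 :: "real^2" where "e2 = axis 2 1"

definition mA :: "real^2^2" where "mA = vector [vector [-1, 0], vector [0, 1]]"
definition mB :: "real^2^2" where "mB = vector [vector [-1, 1], vector [0, 1]]"
definition mC :: "real^2^2" where "mC = vector [vector [0, 1], vector [1, 0]]"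

definition K2 :: "((real^2) set \<Rightarrow> (real^2) set) set" where
  "K2 = {aff_star 0 (mat 1), aff_star ((1/2) *\<^sub>R e1) (mat 1),
         aff_star ((1/2) *\<^sub>R e2) (mat 1), aff_star ((1/2) *\<^sub>R e1 + (1/2) *\<^sub>R e2) (mat 1)}"

end

theory Submission
  imports Defs
begin
lemmas msimps = matrix_matrix_mult_def matrix_vector_mult_def sum_2 mat_def vec_eq_iff forall_2 mA_def mB_def mC_def

lemma int_matrix_mult: "int_matrix A \<Longrightarrow> int_matrix B \<Longrightarrow> int_matrix (A ** B)"
  unfolding int_matrix_def by (simp add: matrix_matrix_mult_def sum_2 Ints_add Ints_mult)

lemma int_matrix_mat1: "int_matrix (mat 1)"
  unfolding int_matrix_def by (simp add: mat_def)

lemma inv_unique: fixes A B :: "real^'n^'n"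
  assumes "A ** B = mat 1" "B ** A = mat 1" shows "matrix_inv A = B"
proof -
  have ex: "\<exists>A'. A ** A' = mat 1 \<and> A' ** A = mat 1" using assms by blast
  have "A ** matrix_inv A = mat 1 \<and> matrix_inv A ** A = mat 1"
    unfolding matrix_inv_def by (rule someI_ex[OF ex])
  then have "matrix_inv A ** A = mat 1" by blast
  then have "matrix_inv A ** (A ** B) = B" by (metis matrix_mul_assoc matrix_mul_lid)
  then show ?thesis using assms by simp
qed

lemma inv_props: fixes A :: "real^'n^'n"
  assumes "invertible A" shows "A ** matrix_inv A = mat 1" "matrix_inv A ** A = mat 1"
proof -
  have ex: "\<exists>A'. A ** A' = mat 1 \<and> A' ** A = mat 1" using assms unfolding invertible_def by blast
  have "A ** matrix_inv A = mat 1 \<and> matrix_inv A ** A = mat 1"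
    unfolding matrix_inv_def by (rule someI_ex[OF ex])
  then show "A ** matrix_inv A = mat 1" "matrix_inv A ** A = mat 1" by blast+
qed

definition mc :: "real^2^2 \<Rightarrow> real^2^2 \<Rightarrow> bool" where
  "mc K X \<longleftrightarrow> (\<exists>P Q. int_matrix P \<and> int_matrix Q \<and> P ** Q = mat 1 \<and> Q ** P = mat 1 \<and> K = P ** X ** Q)"

lemma mat_conj_mc: "mat_conj K X \<longleftrightarrow> mc K X"
proof
  assume "mat_conj K X"
  then obtain P where P: "GL2Z P" "K = P ** X ** matrix_inv P" unfolding mat_conj_def by blast
  then show "mc K X" unfolding mc_def GL2Z_def using inv_props by blast
next
  assume "mc K X"
  then obtain P Q where H: "int_matrix P" "int_matrix Q" "P ** Q = mat 1" "Q ** P = mat 1" "K = P ** X ** Q"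
    unfolding mc_def by blast
  then have "matrix_inv P = Q" by (simp add: inv_unique)
  moreover have "invertible P" using H unfolding invertible_def by blast
  ultimately show "mat_conj K X" unfolding mat_conj_def GL2Z_def using H by auto
qed

lemma mc_refl: "mc K K"
  unfolding mc_def using int_matrix_mat1 by fastforce

lemma mc_sym: "mc K X \<Longrightarrow> mc X K"
proof -
  assume "mc K X"
  then obtain P Q where H: "int_matrix P" "int_matrix Q" "P ** Q = mat 1" "Q ** P = mat 1" "K = P ** X ** Q"
    unfolding mc_def by blast
  have "Q ** K ** P = (Q ** P) ** X ** (Q ** P)" using H(5) by (simp add: matrix_mul_assoc)
  then have "X = Q ** K ** P" using H by simp
  then show "mc X K" unfolding mc_def using H by blast
qed

lemma mc_trans: "mc K X \<Longrightarrow> mc X Y \<Longrightarrow> mc K Y"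
proof -
  assume "mc K X" "mc X Y"
  then obtain P Q P' Q' where H: "int_matrix P" "int_matrix Q" "P ** Q = mat 1" "Q ** P = mat 1" "K = P ** X ** Q"
    and H': "int_matrix P'" "int_matrix Q'" "P' ** Q' = mat 1" "Q' ** P' = mat 1" "X = P' ** Y ** Q'"
    unfolding mc_def by blast
  have "(P ** P') ** (Q' ** Q) = P ** (P' ** Q') ** Q" by (simp add: matrix_mul_assoc)
  then have 1: "(P ** P') ** (Q' ** Q) = mat 1" using H H' by simp
  have "(Q' ** Q) ** (P ** P') = Q' ** (Q ** P) ** P'" by (simp add: matrix_mul_assoc)
  then have 2: "(Q' ** Q) ** (P ** P') = mat 1" using H H' by simp
  have 3: "K = (P ** P') ** Y ** (Q' ** Q)" using H H' by (simp add: matrix_mul_assoc)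
  show "mc K Y" unfolding mc_def using 1 2 3 H H' int_matrix_mult by blast
qed

lemma int_det: "int_matrix P \<Longrightarrow> det P \<in> \<int>"
  unfolding int_matrix_def det_2 by (simp add: Ints_diff Ints_mult)

lemma mc_det: "mc K X \<Longrightarrow> det K = det X"
proof -
  assume "mc K X"
  then obtain P Q where H: "int_matrix P" "int_matrix Q" "P ** Q = mat 1" "Q ** P = mat 1" "K = P ** X ** Q"
    unfolding mc_def by blast
  have "det K = det X * (det Q * det P)" using H(5) by (simp add: det_mul)
  also have "det Q * det P = 1" using H(4) by (metis det_I det_mul)
  finally show ?thesis by simp
qed

lemma mc_trace: "mc K X \<Longrightarrow> trace K = trace X"
proof -
  assume "mc K X"
  then obtain P Q where H: "int_matrix P" "int_matrix Q" "P ** Q = mat 1" "Q ** P = mat 1" "K = P ** X ** Q"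
    unfolding mc_def by blast
  have "trace K = trace (X ** Q ** P)" using H(5) by (metis matrix_mul_assoc trace_mul_sym)
  also have "\<dots> = trace X" using H(4) by (simp add: matrix_mul_assoc[symmetric])
  finally show ?thesis .
qed

lemma det_pm1: "int_matrix P \<Longrightarrow> int_matrix Q \<Longrightarrow> P ** Q = mat 1 \<Longrightarrow> det P = 1 \<or> det P = -1"
proof -
  assume H: "int_matrix P" "int_matrix Q" "P ** Q = mat 1"
  have "det P * det Q = 1" using H(3) by (metis det_I det_mul)
  moreover obtain m n where "det P = of_int m" "det Q = of_int n" using int_det H by (metis Ints_cases)
  ultimately have "m * n = 1" by (metis of_int_eq_1_iff of_int_mult)
  then have "m = 1 \<or> m = -1" using zmult_eq_1_iff by blast
  then show ?thesis using \<open>det P = of_int m\<close> by auto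
qed

lemma mm_entry: "((A::real^2^2) ** B)$i$j = A$i$1*B$1$j + A$i$2*B$2$j"
  by (simp add: matrix_matrix_mult_def sum_2)
lemma mA_e: "mA$1$1 = -1" "mA$1$2 = 0" "mA$2$1 = 0" "mA$2$2 = 1" by (simp_all add: mA_def)
lemma mC_e: "mC$1$1 = 0" "mC$1$2 = 1" "mC$2$1 = 1" "mC$2$2 = 0" by (simp_all add: mC_def)

lemma A_not_C: "\<not> mc mA mC"
proof
  assume "mc mA mC"
  then obtain P Q where H: "int_matrix P" "int_matrix Q" "P ** Q = mat 1" "Q ** P = mat 1" "mA = P ** mC ** Q"
    unfolding mc_def by blast
  have E: "mA ** P = P ** mC" using H by (metis matrix_mul_assoc matrix_mul_rid)
  have "(mA ** P)$1$1 = (P ** mC)$1$1" "(mA ** P)$2$1 = (P ** mC)$2$1" using E by simp_all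
  then have e: "P$1$2 = - P$1$1" "P$2$2 = P$2$1"
    by (simp_all add: mm_entry mA_e mC_e)
  have d: "det P = 2 * (P$1$1 * P$2$1)" using e by (simp add: det_2)
  obtain m n where "P$1$1 = of_int m" "P$2$1 = of_int n" using H(1) unfolding int_matrix_def by (metis Ints_cases)
  then have "det P = of_int (2*m*n)" using d by simp
  then have "2*m*n = 1 \<or> 2*m*n = -1" using det_pm1[OF H(1,2,3)] by (metis of_int_eq_1_iff of_int_eq_iff of_int_minus of_int_1)
  then show False
  proof
    assume "2*m*n = 1" then have "(2*m*n) mod 2 = 1 mod 2" by simp
    then show False by simp
  next
    assume "2*m*n = -1" then have "(2*m*n) mod 2 = (-1) mod 2" by simp
    then show False by simp
  qed
qed

definition Mi :: "int \<Rightarrow> int \<Rightarrow> int \<Rightarrow> int \<Rightarrow> real^2^2" where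
  "Mi a b c e = vector [vector [of_int a, of_int b], vector [of_int c, of_int e]]"

lemma Mi_e[simp]: "(Mi a b c e)$1$1 = of_int a" "(Mi a b c e)$1$2 = of_int b"
  "(Mi a b c e)$2$1 = of_int c" "(Mi a b c e)$2$2 = of_int e"
  by (simp_all add: Mi_def)

lemma mat_eq2: "(A::real^2^2) = B \<longleftrightarrow> A$1$1 = B$1$1 \<and> A$1$2 = B$1$2 \<and> A$2$1 = B$2$1 \<and> A$2$2 = B$2$2"
  by (auto simp: vec_eq_iff forall_2)

lemma Mi_mult: "Mi a b c e ** Mi a' b' c' e' = Mi (a*a'+b*c') (a*b'+b*e') (c*a'+e*c') (c*b'+e*e')"
  by (simp add: mat_eq2 mm_entry)

lemma Mi_eq: "Mi a b c e = Mi a' b' c' e' \<longleftrightarrow> a = a' \<and> b = b' \<and> c = c' \<and> e = e'"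
  by (simp add: mat_eq2)

lemma mat1_Mi: "mat 1 = Mi 1 0 0 1" by (simp add: mat_eq2 mat_def)

lemma int_Mi: "int_matrix (Mi a b c e)"
  unfolding int_matrix_def by (simp add: forall_2)

lemma int_matrix_Mi: "int_matrix K \<Longrightarrow> \<exists>a b c e. K = Mi a b c e"
proof -
  assume "int_matrix K"
  then obtain a b c e where "K$1$1 = of_int a" "K$1$2 = of_int b" "K$2$1 = of_int c" "K$2$2 = of_int e"
    unfolding int_matrix_def by (metis Ints_cases)
  then have "K = Mi a b c e" by (simp add: mat_eq2)
  then show ?thesis by blast
qed

lemma mcI: "Mi p q r s ** Mi p' q' r' s' = mat 1 \<Longrightarrow> Mi p' q' r' s' ** Mi p q r s = mat 1
   \<Longrightarrow> K = Mi p q r s ** X ** Mi p' q' r' s' \<Longrightarrow> mc K X"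
  unfolding mc_def using int_Mi by blast

lemma mcI2: "Mi p q r s ** Mi p' q' r' s' = mat 1 \<Longrightarrow> Mi p' q' r' s' ** Mi p q r s = mat 1
   \<Longrightarrow> K ** Mi p q r s = Mi p q r s ** X \<Longrightarrow> mc K X"
  by (rule mcI[of p q r s p' q' r' s']) (simp_all, metis matrix_mul_assoc matrix_mul_rid)

lemma mc_T: "mc (Mi a b c e) (Mi (a+j*c) (b + j*(e-a) - j^2*c) c (e - j*c))"
  by (rule mcI2[of 1 "-j" 0 1 1 j 0 1]) (simp_all add: Mi_mult mat1_Mi Mi_eq algebra_simps power2_eq_square)

lemma mc_S: "mc (Mi a b c e) (Mi e c b a)"
  by (rule mcI2[of 0 1 1 0 0 1 1 0]) (simp_all add: Mi_mult mat1_Mi Mi_eq algebra_simps)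

lemma exists_red: "(c::int) \<noteq> 0 \<Longrightarrow> \<exists>j. 2*\<bar>a + j*c\<bar> \<le> \<bar>c\<bar>"
proof -
  assume c: "c \<noteq> 0"
  define q r where "q = a div c" "r = a mod c"
  have a: "a = q*c + r" unfolding q_r_def by simp
  have rb: "(0 \<le> r \<and> r < c) \<or> (c < r \<and> r \<le> 0)" unfolding q_r_def using c
    by (metis neg_mod_bound neg_mod_sign not_less_iff_gr_or_eq pos_mod_bound pos_mod_sign)
  show ?thesis
  proof (cases "2*\<bar>r\<bar> \<le> \<bar>c\<bar>")
    case True
    have "a + (-q)*c = r" using a by simp
    then show ?thesis using True by metis
  next
    case False
    have "a + (-q-1)*c = r - c" using a by (simp add: algebra_simps)
    moreover have "2*\<bar>r - c\<bar> \<le> \<bar>c\<bar>" using False rb by auto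
    ultimately show ?thesis by metis
  qed
qed

lemma bound_lemma:
  fixes x y B :: int
  assumes "2*x \<le> y" "y \<ge> 2" "x \<ge> 0" "B \<le> x*x + x + 1" "B \<ge> y*y"
  shows False
proof -
  have "(2*x)*(2*x) \<le> y*y" by (rule mult_mono) (use assms in auto)
  moreover have "y*y \<ge> 2*y" using assms by (simp add: mult_right_mono)
  ultimately show False using assms by (simp add: algebra_simps)
qed

lemma descent:
  fixes R :: "real^2^2 \<Rightarrow> bool" and t d :: int
  assumes t: "\<bar>t\<bar> \<le> 1" and d: "d = 1 \<or> d = -1"
    and R: "\<And>K X. mc K X \<Longrightarrow> R X \<Longrightarrow> R K"
    and H0: "\<And>a b. a*(t-a) = d \<Longrightarrow> R (Mi a b 0 (t-a))"
    and H1: "\<And>b c. (c = 1 \<or> c = -1) \<Longrightarrow> b*c = -d \<Longrightarrow> R (Mi 0 b c t)"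
  shows "a*(t-a) - b*c = d \<Longrightarrow> R (Mi a b c (t-a))"
proof (induction "nat \<bar>c\<bar>" arbitrary: a b c rule: less_induct)
  case less
  show ?case
  proof (cases "c = 0")
    case True
    then show ?thesis using H0 less.prems by simp
  next
    case False
    obtain j where j: "2*\<bar>a + j*c\<bar> \<le> \<bar>c\<bar>" using exists_red[OF False] by blast
    define a' b' where "a' = a + j*c" "b' = b + j*((t-a)-a) - j^2*c"
    have m1: "mc (Mi a b c (t-a)) (Mi a' b' c (t - a'))"
      using mc_T[of a b c "t-a" j] unfolding a'_b'_def by (simp add: algebra_simps)
    have det': "a'*(t-a') - b'*c = d" using less.prems unfolding a'_b'_def
      by (simp add: algebra_simps power2_eq_square)
    have ja: "2*\<bar>a'\<bar> \<le> \<bar>c\<bar>" using j a'_b'_def by simp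
    show ?thesis
    proof (cases "\<bar>c\<bar> = 1")
      case True
      then have "a' = 0" using ja by simp
      moreover have "c = 1 \<or> c = -1" using True by arith
      ultimately have "R (Mi a' b' c (t-a'))" using H1[of c b'] det' by auto
      then show ?thesis using R m1 by blast
    next
      case c2: False
      then have cc: "\<bar>c\<bar> \<ge> 2" using False by simp
      have bb: "\<bar>b'\<bar> < \<bar>c\<bar>"
      proof (rule ccontr)
        assume "\<not> \<bar>b'\<bar> < \<bar>c\<bar>"
        then have "\<bar>b'\<bar> * \<bar>c\<bar> \<ge> \<bar>c\<bar> * \<bar>c\<bar>" using mult_right_mono[of "\<bar>c\<bar>" "\<bar>b'\<bar>" "\<bar>c\<bar>"] by linarith
        then have h1: "\<bar>b'*c\<bar> \<ge> \<bar>c\<bar> * \<bar>c\<bar>" by (simp add: abs_mult)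
        have "b'*c = a'*(t-a') - d" using det' by simp
        moreover have "\<bar>a'*(t-a')\<bar> \<le> \<bar>a'\<bar>*\<bar>a'\<bar> + \<bar>a'\<bar>"
        proof -
          have "\<bar>t - a'\<bar> \<le> \<bar>a'\<bar> + 1" using t by simp
          then have "\<bar>a'\<bar>*\<bar>t-a'\<bar> \<le> \<bar>a'\<bar>*(\<bar>a'\<bar> + 1)" by (simp add: mult_left_mono)
          moreover have "\<bar>a'*(t-a')\<bar> = \<bar>a'\<bar>*\<bar>t-a'\<bar>" by (rule abs_mult)
          moreover have "\<bar>a'\<bar>*(\<bar>a'\<bar> + 1) = \<bar>a'\<bar>*\<bar>a'\<bar> + \<bar>a'\<bar>" by (simp add: algebra_simps)
          ultimately show ?thesis by linarith
        qed
        ultimately have "\<bar>b'*c\<bar> \<le> \<bar>a'\<bar>*\<bar>a'\<bar> + \<bar>a'\<bar> + 1" using d by auto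
        then show False using bound_lemma[of "\<bar>a'\<bar>" "\<bar>c\<bar>" "\<bar>b'*c\<bar>"] ja cc h1 by simp
      qed
      have m2: "mc (Mi a' b' c (t-a')) (Mi (t-a') c b' (t - (t-a')))"
        using mc_S[of a' b' c "t-a'"] by simp
      have "R (Mi (t-a') c b' (t - (t-a')))"
        using less.hyps[of b' "t-a'" c] bb det' by (simp add: algebra_simps)
      then show ?thesis using R m1 m2 by blast
    qed
  qed
qed


lemma mA_Mi: "mA = Mi (-1) 0 0 1" by (simp add: mat_eq2 mA_def)
lemma mC_Mi: "mC = Mi 0 1 1 0" by (simp add: mat_eq2 mC_def)
lemma mB_Mi: "mB = Mi (-1) 1 0 1" by (simp add: mat_eq2 mB_def)
lemma BC_Mi: "mB ** mC = Mi 1 (-1) 1 0" by (simp add: mB_Mi mC_Mi Mi_mult)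
lemma BC2_Mi: "(mB ** mC) ** (mB ** mC) = Mi 0 (-1) 1 (-1)" by (simp add: BC_Mi Mi_mult)
lemma AC_Mi: "mA ** mC = Mi 0 (-1) 1 0" by (simp add: mA_Mi mC_Mi Mi_mult)
lemma negI_Mi: "- mat 1 = Mi (-1) 0 0 (-1)" by (simp add: mat_eq2 mat_def)

lemma class_refl:
  assumes "a*a + b*c = 1"
  shows "mc (Mi a b c (-a)) mA \<or> mc (Mi a b c (-a)) mC"
proof -
  let ?R = "\<lambda>K. mc K mA \<or> mc K mC"
  have R: "\<And>K X. mc K X \<Longrightarrow> ?R X \<Longrightarrow> ?R K" using mc_trans by blast
  have H0: "?R (Mi a b 0 (0-a))" if "a*(0-a) = -1" for a b
  proof -
    have a: "a = 1 \<or> a = -1" using that zmult_eq_1_iff[of a a] by (simp add: algebra_simps)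
    define j where "j = a * (b div 2)"
    have "mc (Mi a b 0 (0-a)) (Mi a (b mod 2) 0 (-a))"
      using mc_T[of a b 0 "0-a" j] a unfolding j_def
      by (auto simp: algebra_simps minus_mod_eq_mult_div[symmetric])
    moreover have "?R (Mi a (b mod 2) 0 (-a))"
    proof -
      have bm: "b mod 2 = 0 \<or> b mod 2 = 1" by auto
      have "mc (Mi 1 0 0 (-1)) mA" using mc_S[of 1 0 0 "-1"] by (simp add: mA_Mi)
      moreover have "mc (Mi (-1) 0 0 1) mA" by (simp add: mA_Mi mc_refl)
      moreover have "mc (Mi 1 1 0 (-1)) mC"
        by (rule mcI2[of 1 0 "-1" 1 1 0 1 1]) (simp_all add: Mi_mult mat1_Mi mC_Mi)
      moreover have "mc (Mi (-1) 1 0 1) mC"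
        by (rule mcI2[of 1 0 1 1 1 0 "-1" 1]) (simp_all add: Mi_mult mat1_Mi mC_Mi)
      ultimately show ?thesis using a bm by auto
    qed
    ultimately show ?thesis using R by blast
  qed
  have H1: "?R (Mi 0 b c 0)" if "c = 1 \<or> c = -1" "b*c = - (-1)" for b c
  proof -
    have "(b = 1 \<and> c = 1) \<or> (b = -1 \<and> c = -1)" using that by auto
    moreover have "mc (Mi 0 1 1 0) mC" by (simp add: mC_Mi mc_refl)
    moreover have "mc (Mi 0 (-1) (-1) 0) mC"
      by (rule mcI2[of "-1" 0 0 1 "-1" 0 0 1]) (simp_all add: Mi_mult mat1_Mi mC_Mi)
    ultimately show ?thesis by auto
  qed
  have "?R (Mi a b c (0-a))"
    by (rule descent[of 0 "-1" ?R, OF _ _ R H0 H1]) (use assms in auto)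
  then show ?thesis by simp
qed

lemma class_ell:
  assumes t: "\<bar>t\<bar> \<le> 1" and "a*(t-a) - b*c = 1"
  shows "mc (Mi a b c (t-a)) (Mi 0 (-1) 1 t)"
proof -
  let ?R = "\<lambda>K. mc K (Mi 0 (-1) 1 t)"
  have R: "\<And>K X. mc K X \<Longrightarrow> ?R X \<Longrightarrow> ?R K" using mc_trans by blast
  have H0: "?R (Mi a b 0 (t-a))" if "a*(t-a) = 1" for a b
  proof -
    have "a = 1 \<and> t - a = 1 \<or> a = -1 \<and> t - a = -1" using that zmult_eq_1_iff by blast
    then show ?thesis using t by auto
  qed
  have H1: "?R (Mi 0 b c t)" if "c = 1 \<or> c = -1" "b*c = - 1" for b c
  proof -
    have "(b = -1 \<and> c = 1) \<or> (b = 1 \<and> c = -1)" using that by auto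
    moreover have "?R (Mi 0 (-1) 1 t)" by (simp add: mc_refl)
    moreover have "?R (Mi 0 1 (-1) t)"
      by (rule mcI2[of "-1" 0 0 1 "-1" 0 0 1]) (simp_all add: Mi_mult mat1_Mi)
    ultimately show ?thesis by auto
  qed
  show ?thesis
    by (rule descent[of t 1 ?R, OF t _ R H0 H1]) (use assms in auto)
qed

lemma N1_BC: "mc (Mi 0 (-1) 1 1) (mB ** mC)"
  using mc_sym[OF mc_T[of 1 "-1" 1 0 "-1"]] by (simp add: BC_Mi)


fun sa :: "int \<Rightarrow> int \<Rightarrow> nat \<Rightarrow> int" where
  "sa t d 0 = 0" | "sa t d (Suc 0) = 1" | "sa t d (Suc (Suc n)) = t * sa t d (Suc n) - d * sa t d n"

lemma mpow_Suc: "mpow K (Suc n) = K ** mpow K n" by (simp add: mpow_def)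

lemma mpow_formula:
  "mpow (Mi a b c e) (Suc n) =
     Mi (sa (a+e) (a*e-b*c) (Suc n) * a - (a*e-b*c) * sa (a+e) (a*e-b*c) n)
        (sa (a+e) (a*e-b*c) (Suc n) * b) (sa (a+e) (a*e-b*c) (Suc n) * c)
        (sa (a+e) (a*e-b*c) (Suc n) * e - (a*e-b*c) * sa (a+e) (a*e-b*c) n)"
proof (induction n)
  case 0
  then show ?case by (simp add: mpow_def)
next
  case (Suc n)
  show ?case unfolding mpow_Suc[of _ "Suc n"] Suc by (simp add: Mi_mult Mi_eq algebra_simps)
qed

lemma abs_same_sign: fixes u v :: int shows "0 \<le> u * v \<Longrightarrow> abs (u+v) = abs u + abs v"
  by (auto simp: abs_if zero_le_mult_iff)

lemma L1: assumes "t \<noteq> 0"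
  shows "t * sa t (-1) n * sa t (-1) (Suc n) \<ge> 0 \<and> \<bar>sa t (-1) n\<bar> \<le> \<bar>sa t (-1) (Suc n)\<bar> \<and> sa t (-1) (Suc n) \<noteq> 0"
proof (induction n)
  case 0
  then show ?case by simp
next
  case (Suc n)
  define x y where "x = sa t (-1) n" "y = sa t (-1) (Suc n)"
  have z: "sa t (-1) (Suc (Suc n)) = t*y + x" unfolding x_y_def by simp
  have ih: "t*x*y \<ge> 0" "\<bar>x\<bar> \<le> \<bar>y\<bar>" "y \<noteq> 0" using Suc unfolding x_y_def by auto
  have "t*y*(t*y+x) = (t*y)*(t*y) + t*x*y" by (simp add: algebra_simps)
  moreover have "(t*y)*(t*y) \<ge> 0" by simp
  ultimately have g1: "t*y*(t*y+x) \<ge> 0" using ih by linarith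
  have "(t*y)*x \<ge> 0" using ih by (simp add: algebra_simps)
  then have "\<bar>t*y+x\<bar> = \<bar>t*y\<bar> + \<bar>x\<bar>" by (rule abs_same_sign)
  moreover have "\<bar>t*y\<bar> \<ge> \<bar>y\<bar>" using assms mult_right_mono[of 1 "\<bar>t\<bar>" "\<bar>y\<bar>"] by (simp add: abs_mult)
  ultimately have g2: "\<bar>t*y+x\<bar> \<ge> \<bar>y\<bar>" by simp
  then have g3: "t*y+x \<noteq> 0" using ih by auto
  show ?case using g1 g2 g3 z unfolding x_y_def by simp
qed

lemma L2: assumes "\<bar>t\<bar> \<ge> 3"
  shows "\<bar>sa t 1 n\<bar> < \<bar>sa t 1 (Suc n)\<bar>"
proof (induction n)
  case 0
  then show ?case by simp
next
  case (Suc n)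
  define x y where "x = sa t 1 n" "y = sa t 1 (Suc n)"
  have z: "sa t 1 (Suc (Suc n)) = t*y - x" unfolding x_y_def by simp
  have ih: "\<bar>x\<bar> < \<bar>y\<bar>" using Suc unfolding x_y_def by auto
  have "\<bar>t*y\<bar> \<ge> 3*\<bar>y\<bar>" using assms by (simp add: abs_mult mult_right_mono)
  then have "\<bar>t*y - x\<bar> > \<bar>y\<bar>" using ih by linarith
  then show ?case using z unfolding x_y_def by simp
qed

lemma L3a: "sa 2 1 n = int n \<and> sa 2 1 (Suc n) = int n + 1"
  by (induction n) auto

lemma L3b: "sa (-2) 1 n = (-1)^(n+1) * int n \<and> sa (-2) 1 (Suc n) = (-1)^n * (int n + 1)"
  by (induction n) (auto simp: algebra_simps)

lemma sa_nonzero: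
  assumes d: "d = 1 \<or> d = -1" and z: "sa t d (Suc m) = 0"
  shows "(d = -1 \<and> t = 0) \<or> (d = 1 \<and> \<bar>t\<bar> \<le> 1)"
proof (rule ccontr)
  assume H: "\<not> ?thesis"
  show False
  proof (cases "d = -1")
    case True
    then have "t \<noteq> 0" using H by simp
    then show False using L1[of t m] z True by simp
  next
    case False
    then have d1: "d = 1" using d by simp
    then have "\<bar>t\<bar> \<ge> 2" using H by simp
    then consider "\<bar>t\<bar> \<ge> 3" | "t = 2" | "t = -2" by linarith
    then show False
    proof cases
      case 1
      then show ?thesis using L2[of t m] z d1 by simp
    next
      case 2
      then show ?thesis using L3a[of m] z d1 by simp
    next
      case 3
      then show ?thesis using L3b[of m] z d1 by simp
    qed
  qed
qed

lemma finite_order_class: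
  assumes d: "a*e - b*c = 1 \<or> a*e - b*c = -1" and n: "n > 0" and p: "mpow (Mi a b c e) n = mat 1"
  shows "Mi a b c e = mat 1 \<or> Mi a b c e = - mat 1 \<or> mc (Mi a b c e) mA \<or> mc (Mi a b c e) mC
     \<or> mc (Mi a b c e) ((mB ** mC) ** (mB ** mC)) \<or> mc (Mi a b c e) (mA ** mC) \<or> mc (Mi a b c e) (mB ** mC)"
proof -
  obtain m where m: "n = Suc m" using n by (cases n) auto
  define s s2 where "s = sa (a+e) (a*e-b*c) (Suc m)" "s2 = sa (a+e) (a*e-b*c) m"
  have eqs: "s*a - (a*e-b*c) * s2 = 1" "s*b = 0" "s*c = 0" "s*e - (a*e-b*c) * s2 = 1"
  proof -
    have "Mi (s*a - (a*e-b*c) * s2) (s*b) (s*c) (s*e - (a*e-b*c) * s2) = Mi 1 0 0 1"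
      using p mpow_formula[of a b c e m] unfolding m s_s2_def mat1_Mi by simp
    then show "s*a - (a*e-b*c) * s2 = 1" "s*b = 0" "s*c = 0" "s*e - (a*e-b*c) * s2 = 1"
      unfolding Mi_eq by auto
  qed
  show ?thesis
  proof (cases "s = 0")
    case False
    have bc0: "b = 0" "c = 0" using eqs False by auto
    have "s*a = s*e" using eqs by linarith
    then have bc: "b = 0" "c = 0" "a = e" using bc0 False by auto
    have "a*a = 1 \<or> a*a = -1" using d bc by simp
    moreover have "a*a \<ge> 0" by simp
    ultimately have "a*a = 1" by linarith
    then have "a = 1 \<or> a = -1" using zmult_eq_1_iff by blast
    moreover have "Mi (-1) 0 0 (-1) = - mat 1" "Mi 1 0 0 1 = mat 1" using negI_Mi mat1_Mi by simp_all
    ultimately show ?thesis using bc by metis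
  next
    case True
    then have "(a*e-b*c = -1 \<and> a+e = 0) \<or> (a*e-b*c = 1 \<and> \<bar>a+e\<bar> \<le> 1)"
      using sa_nonzero[OF d, of "a+e" m] s_s2_def by simp
    then show ?thesis
    proof
      assume H: "a*e-b*c = -1 \<and> a+e = 0"
      then have ea: "e = -a" by simp
      have "a*e - b*c = -1" using H by simp
      then have "a*(-a) - b*c = -1" using ea by simp
      then have "a*a + b*c = 1" by simp
      then show ?thesis using class_refl[of a b c] ea by auto
    next
      assume H: "a*e-b*c = 1 \<and> \<bar>a+e\<bar> \<le> 1"
      define t where "t = a + e"
      have e: "e = t - a" unfolding t_def by simp
      have "mc (Mi a b c e) (Mi 0 (-1) 1 t)"
        using class_ell[of t a b c] H unfolding e by (simp add: t_def algebra_simps)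
      moreover have "t = -1 \<or> t = 0 \<or> t = 1" using H t_def by auto
      ultimately show ?thesis using N1_BC mc_trans by (auto simp: BC2_Mi AC_Mi)
    qed
  qed
qed


abbreviation "LL \<equiv> [mat 1, - mat 1, mA, mC, (mB ** mC) ** (mB ** mC), mA ** mC, mB ** mC]"

lemma trace_Mi: "trace (Mi a b c e) = of_int (a + e)" by (simp add: trace_def sum_2)
lemma det_Mi: "det (Mi a b c e) = of_int (a*e - b*c)" by (simp add: det_2)

lemma LL_Mi: "LL = [Mi 1 0 0 1, Mi (-1) 0 0 (-1), Mi (-1) 0 0 1, Mi 0 1 1 0, Mi 0 (-1) 1 (-1), Mi 0 (-1) 1 0, Mi 1 (-1) 1 0]"
  by (subst BC2_Mi, subst AC_Mi, subst BC_Mi, subst negI_Mi, simp only: mA_Mi mC_Mi mat1_Mi)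

lemma LL_inv: "k < 7 \<Longrightarrow> trace (LL!k) = of_int ([2,-2,0,0,-1,0,1]!k) \<and> det (LL!k) = of_int ([1,1,-1,-1,1,1,1]!k)"
proof -
  assume "k < 7"
  then have "k = 0 \<or> k = 1 \<or> k = 2 \<or> k = 3 \<or> k = 4 \<or> k = 5 \<or> k = 6" by arith
  then show ?thesis unfolding LL_Mi by (elim disjE) (simp_all add: trace_Mi det_Mi numeral_eq_Suc)
qed

lemma LL_uniq: assumes "i < 7" "j < 7" "mc (LL!i) (LL!j)" shows "i = j"
proof -
  have t: "trace (LL!i) = trace (LL!j)" "det (LL!i) = det (LL!j)" using mc_trace mc_det assms(3) by auto
  then have t2: "([2,-2,0,0,-1,0,1::int]!i) = [2,-2,0,0,-1,0,1]!j" "([1,1,-1,-1,1,1,1::int]!i) = [1,1,-1,-1,1,1,1]!j"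
    using LL_inv[OF assms(1)] LL_inv[OF assms(2)] by (metis of_int_eq_iff)+
  have n: "\<not> (i = 2 \<and> j = 3)" "\<not>(i=3 \<and> j=2)" using A_not_C mc_sym assms(3) by auto
  have "i = 0 \<or> i = 1 \<or> i = 2 \<or> i = 3 \<or> i = 4 \<or> i = 5 \<or> i = 6" using assms(1) by arith
  moreover have "j = 0 \<or> j = 1 \<or> j = 2 \<or> j = 3 \<or> j = 4 \<or> j = 5 \<or> j = 6" using assms(2) by arith
  ultimately show ?thesis using t2 n by (elim disjE) (simp_all add: numeral_eq_Suc)
qed

lemma part0:
  assumes "GL2Z K" and "\<exists>n>0. mpow K n = mat 1"
  shows "card {i. i < 7 \<and> mat_conj K (LL ! i)} = 1"
proof -
  have G: "int_matrix K" "invertible K" "int_matrix (matrix_inv K)" using assms(1) unfolding GL2Z_def by auto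
  obtain a b c e where K: "K = Mi a b c e" using int_matrix_Mi[OF G(1)] by blast
  have inv: "K ** matrix_inv K = mat 1" using inv_props(1)[OF G(2)] .
  have "det K = 1 \<or> det K = -1" using det_pm1[OF G(1) G(3) inv] .
  then have "real_of_int (a*e - b*c) = 1 \<or> real_of_int (a*e - b*c) = -1" unfolding K det_Mi .
  then have "real_of_int (a*e - b*c) = real_of_int 1 \<or> real_of_int (a*e - b*c) = real_of_int (-1)" by simp
  then have d: "a*e - b*c = 1 \<or> a*e - b*c = -1" by (simp only: of_int_eq_iff)
  obtain n where n: "n > 0" "mpow K n = mat 1" using assms(2) by blast
  have "K = mat 1 \<or> K = - mat 1 \<or> mc K mA \<or> mc K mC
     \<or> mc K ((mB ** mC) ** (mB ** mC)) \<or> mc K (mA ** mC) \<or> mc K (mB ** mC)"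
  proof -
    have "mpow (Mi a b c e) n = mat 1" using n(2) K by simp
    from finite_order_class[OF d n(1) this] show ?thesis by (simp only: K)
  qed
  then have "\<exists>i<7. mc K (LL!i)"
  proof (elim disjE)
    assume "K = mat 1" then show ?thesis by (intro exI[of _ 0]) (simp add: mc_refl)
  next
    assume "K = - mat 1" then show ?thesis by (intro exI[of _ 1]) (simp add: mc_refl)
  next
    assume "mc K mA" then show ?thesis by (intro exI[of _ 2]) simp
  next
    assume "mc K mC" then show ?thesis by (intro exI[of _ 3]) (simp add: numeral_eq_Suc)
  next
    assume "mc K ((mB ** mC) ** (mB ** mC))" then show ?thesis by (intro exI[of _ 4]) (simp add: numeral_eq_Suc)
  next
    assume "mc K (mA ** mC)" then show ?thesis by (intro exI[of _ 5]) (simp add: numeral_eq_Suc)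
  next
    assume "mc K (mB ** mC)" then show ?thesis by (intro exI[of _ 6]) (simp add: numeral_eq_Suc)
  qed
  then obtain i0 where i0: "i0 < 7" "mc K (LL!i0)" by blast
  have "{i. i < 7 \<and> mat_conj K (LL ! i)} = {i0}"
  proof -
    have "j = i0" if "j < 7" "mc K (LL!j)" for j
      using LL_uniq[of i0 j, OF i0(1) that(1) mc_trans[OF mc_sym[OF i0(2)] that(2)]] by (rule sym)
    then show ?thesis using i0 unfolding mat_conj_mc set_eq_iff mem_Collect_eq singleton_iff by blast
  qed
  then show ?thesis by simp
qed


lemma latt_iff: "z \<in> latt \<longleftrightarrow> z$1 \<in> \<int> \<and> z$2 \<in> \<int>"
  unfolding latt_def by (simp add: forall_2)

lemma latt_add: "x \<in> latt \<Longrightarrow> y \<in> latt \<Longrightarrow> x + y \<in> latt"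
  unfolding latt_iff by (simp add: Ints_add)
lemma latt_diff: "x \<in> latt \<Longrightarrow> y \<in> latt \<Longrightarrow> x - y \<in> latt"
  unfolding latt_iff by (simp add: Ints_diff)
lemma latt_0: "0 \<in> latt" unfolding latt_iff by simp
lemma latt_mat: "int_matrix A \<Longrightarrow> z \<in> latt \<Longrightarrow> A *v z \<in> latt"
  unfolding latt_iff int_matrix_def by (simp add: matrix_vector_mult_def sum_2 Ints_add Ints_mult)

lemma mv_neg: "(A::real^2^2) *v (- x) = - (A *v x)"
  by (simp add: vec_eq_iff matrix_vector_mult_def sum_negf)

lemma in_tpt: "y \<in> tpt x \<longleftrightarrow> y - x \<in> latt"
  unfolding tpt_def by (auto simp: algebra_simps) (metis add.commute diff_add_cancel)

lemma tpt_eq: "tpt x = tpt y \<longleftrightarrow> x - y \<in> latt"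
proof
  assume "tpt x = tpt y"
  moreover have "x \<in> tpt x" by (simp add: in_tpt latt_0)
  ultimately have "x \<in> tpt y" by simp
  then show "x - y \<in> latt" using in_tpt by blast
next
  assume h: "x - y \<in> latt"
  show "tpt x = tpt y"
  proof (rule set_eqI)
    fix z
    have "z - y = (z - x) + (x - y)" "z - x = (z - y) - (x - y)" by simp_all
    then show "z \<in> tpt x \<longleftrightarrow> z \<in> tpt y" unfolding in_tpt using h latt_add latt_diff by metis
  qed
qed

lemma tpt_torus: "tpt x \<in> torus" unfolding torus_def by simp
lemma torusE: "p \<in> torus \<Longrightarrow> (\<And>x. p = tpt x \<Longrightarrow> P) \<Longrightarrow> P" unfolding torus_def by blast

lemma aff_tpt: assumes "int_matrix A" shows "aff_star a A (tpt x) = tpt (a + A *v x)"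
proof -
  have ex: "\<exists>y. y \<in> tpt x" using in_tpt latt_0 by (metis diff_self)
  define y where "y = (SOME y. y \<in> tpt x)"
  have "y \<in> tpt x" unfolding y_def using someI_ex[OF ex] .
  then have "y - x \<in> latt" by (simp add: in_tpt)
  then have "A *v (y - x) \<in> latt" using latt_mat assms by blast
  then have "(a + A *v y) - (a + A *v x) \<in> latt" by (simp add: matrix_vector_mult_diff_distrib)
  then have "tpt (a + A *v y) = tpt (a + A *v x)" by (simp add: tpt_eq)
  then show ?thesis unfolding aff_star_def using tpt_torus y_def by simp
qed

lemma aff_torus: "int_matrix A \<Longrightarrow> p \<in> torus \<Longrightarrow> aff_star a A p \<in> torus"
  by (metis aff_tpt torusE tpt_torus)

lemma aff_cong: assumes "a - b \<in> latt" "int_matrix A" shows "aff_star a A = aff_star b A"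
proof
  fix p show "aff_star a A p = aff_star b A p"
  proof (cases "p \<in> torus")
    case True
    then obtain x where x: "p = tpt x" by (rule torusE)
    have "(a + A *v x) - (b + A *v x) \<in> latt" using assms by simp
    then show ?thesis using x aff_tpt[OF assms(2)] by (simp add: tpt_eq)
  next
    case False
    then show ?thesis unfolding aff_star_def by simp
  qed
qed

lemma GL2Z_inv: assumes "GL2Z P" shows "GL2Z (matrix_inv P)" "P ** matrix_inv P = mat 1" "matrix_inv P ** P = mat 1"
proof -
  have G: "int_matrix P" "invertible P" "int_matrix (matrix_inv P)" using assms unfolding GL2Z_def by auto
  show 1: "P ** matrix_inv P = mat 1" "matrix_inv P ** P = mat 1" using inv_props[OF G(2)] by auto
  have "matrix_inv (matrix_inv P) = P" using inv_unique 1 by blast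
  moreover have "invertible (matrix_inv P)" unfolding invertible_def using 1 by blast
  ultimately show "GL2Z (matrix_inv P)" unfolding GL2Z_def using G by simp
qed

lemma aff_conj_gen:
  assumes P: "GL2Z P" and F: "int_matrix F" and KK: "K = P ** F ** matrix_inv P"
    and L: "k - (P *v f + t - K *v t) \<in> latt"
  shows "aff_conj (aff_star k K) (aff_star f F)"
proof -
  define Q where "Q = matrix_inv P"
  have Q: "GL2Z Q" "P ** Q = mat 1" "Q ** P = mat 1" using GL2Z_inv[OF P] unfolding Q_def by auto
  have iP: "int_matrix P" and iQ: "int_matrix Q" using P Q unfolding GL2Z_def by auto
  have iK: "int_matrix K" using KK iP iQ F int_matrix_mult unfolding Q_def[symmetric] by simp
  define \<psi> where "\<psi> = aff_star t P"
  define \<psi>' where "\<psi>' = aff_star (- (Q *v t)) Q"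
  have A1: "\<psi> \<in> Aff" "\<psi>' \<in> Aff" unfolding \<psi>_def \<psi>'_def Aff_def using P Q by auto
  have "\<psi>' (\<psi> p) = p \<and> \<psi> (\<psi>' p) = p" if hp: "p \<in> torus" for p
  proof -
    obtain x where x: "p = tpt x" using hp by (rule torusE)
    have "\<psi>' (\<psi> p) = tpt (- (Q *v t) + Q *v (t + P *v x))" unfolding x \<psi>_def \<psi>'_def
      using aff_tpt iP iQ by simp
    also have "- (Q *v t) + Q *v (t + P *v x) = x"
      by (simp add: matrix_vector_right_distrib matrix_vector_mul_assoc Q)
    finally have 1: "\<psi>' (\<psi> p) = p" using x by simp
    have "\<psi> (\<psi>' p) = tpt (t + P *v (- (Q *v t) + Q *v x))" unfolding x \<psi>_def \<psi>'_def
      using aff_tpt iP iQ by simp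
    also have "t + P *v (- (Q *v t) + Q *v x) = x"
      by (simp add: matrix_vector_right_distrib matrix_vector_mult_diff_distrib matrix_vector_mul_assoc Q mv_neg)
    finally have 2: "\<psi> (\<psi>' p) = p" using x by simp
    show ?thesis using 1 2 by simp
  qed
  moreover have "aff_star k K p = \<psi> (aff_star f F (\<psi>' p))" if hp: "p \<in> torus" for p
  proof -
    obtain x where x: "p = tpt x" using hp by (rule torusE)
    have "\<psi> (aff_star f F (\<psi>' p)) = tpt (t + P *v (f + F *v (- (Q *v t) + Q *v x)))"
      unfolding x \<psi>_def \<psi>'_def using aff_tpt iP iQ F by simp
    also have "t + P *v (f + F *v (- (Q *v t) + Q *v x)) = t + P *v f - K *v t + K *v x"
    proof -
      have pk: "P *v (F *v (Q *v y)) = K *v y" for y by (simp add: KK Q_def matrix_vector_mul_assoc matrix_mul_assoc)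
      show ?thesis by (simp add: matrix_vector_right_distrib mv_neg pk algebra_simps)
    qed
    finally have e: "\<psi> (aff_star f F (\<psi>' p)) = tpt (t + P *v f - K *v t + K *v x)" .
    have "(k + K *v x) - (t + P *v f - K *v t + K *v x) = k - (P *v f + t - K *v t)" by (simp add: algebra_simps)
    then have "tpt (k + K *v x) = tpt (t + P *v f - K *v t + K *v x)" using L tpt_eq by metis
    then show ?thesis using e x aff_tpt[OF iK] by simp
  qed
  ultimately show ?thesis unfolding aff_conj_def using A1 by blast
qed


lemma mv_entry: "((A::real^2^2) *v x)$i = A$i$1 * x$1 + A$i$2 * x$2"
  by (simp add: matrix_vector_mult_def sum_2)

lemma conj2:
  assumes P: "GL2Z P" and X: "int_matrix X" and KK: "K = P ** X ** matrix_inv P"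
    and L: "(matrix_inv P *v k) - f - s + X *v s \<in> latt"
  shows "aff_conj (aff_star k K) (aff_star f X)"
proof -
  define Q where "Q = matrix_inv P"
  have Q: "P ** Q = mat 1" "Q ** P = mat 1" using GL2Z_inv[OF P] unfolding Q_def by auto
  have iP: "int_matrix P" using P unfolding GL2Z_def by auto
  have KP: "K *v (P *v s) = P *v (X *v s)"
    by (simp add: KK Q_def[symmetric] matrix_vector_mul_assoc matrix_mul_assoc[symmetric] Q)
  have kk: "k = P *v (Q *v k)" by (simp add: matrix_vector_mul_assoc Q)
  have "k - (P *v f + P *v s - K *v (P *v s)) = P *v ((Q *v k) - f - s + X *v s)"
    by (subst kk, simp only: KP, simp add: matrix_vector_right_distrib matrix_vector_mult_diff_distrib algebra_simps)
  then have "k - (P *v f + P *v s - K *v (P *v s)) \<in> latt" using latt_mat[OF iP L[folded Q_def]] by simp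
  then show ?thesis by (rule aff_conj_gen[OF P X KK])
qed

lemma order2_latt:
  assumes "aff_order2 (aff_star k K)" "int_matrix K"
  shows "k + K *v k \<in> latt"
proof -
  have "aff_star k K (aff_star k K (tpt 0)) = tpt 0" using assms(1) tpt_torus unfolding aff_order2_def by blast
  then have "tpt (k + K *v k) = tpt 0" using aff_tpt[OF assms(2)] by simp
  then show ?thesis by (simp add: tpt_eq)
qed

lemma order2_conj:
  assumes "aff_order2 (aff_star k K)" "GL2Z P" "K = P ** X ** matrix_inv P" "int_matrix X"
  shows "matrix_inv P *v k + X *v (matrix_inv P *v k) \<in> latt"
proof -
  define Q where "Q = matrix_inv P"
  have Q: "P ** Q = mat 1" "Q ** P = mat 1" "int_matrix Q" "int_matrix P"
    using GL2Z_inv[OF assms(2)] assms(2) unfolding Q_def GL2Z_def by auto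
  have iK: "int_matrix K" using assms(3,4) Q int_matrix_mult unfolding Q_def[symmetric] by simp
  have l: "k + K *v k \<in> latt" by (rule order2_latt[OF assms(1) iK])
  have "Q *v (k + K *v k) = Q *v k + X *v (Q *v k)"
    by (simp add: assms(3) Q_def[symmetric] matrix_vector_right_distrib matrix_vector_mul_assoc matrix_mul_assoc Q)
  then show ?thesis using latt_mat[OF Q(3) l] unfolding Q_def by simp
qed

lemma conj_fixed:
  assumes P: "GL2Z P" and X: "int_matrix X" and KK: "K = P ** X ** matrix_inv P"
    and Y: "(mat 1 - X) ** Y = mat 1"
  shows "aff_conj (aff_star k K) (aff_star 0 X)"
proof -
  define k' where "k' = matrix_inv P *v k"
  have "k' - 0 - Y *v k' + X *v (Y *v k') = k' - (mat 1 - X) *v (Y *v k')"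
    by (simp add: matrix_vector_mult_diff_rdistrib)
  also have "\<dots> = 0" by (simp add: matrix_vector_mul_assoc Y)
  finally show ?thesis using conj2[OF P X KK, of k 0 "Y *v k'"] latt_0 unfolding k'_def by simp
qed

lemma half_int: fixes u :: real shows "2*u \<in> \<int> \<Longrightarrow> u \<notin> \<int> \<Longrightarrow> u - 1/2 \<in> \<int>"
proof -
  assume a: "2*u \<in> \<int>" "u \<notin> \<int>"
  obtain m where m: "2*u = of_int m" using a(1) by (metis Ints_cases)
  have "odd m"
  proof
    assume "even m" then obtain j where "m = 2*j" by blast
    then have "u = of_int j" using m by simp
    then show False using a(2) by simp
  qed
  then obtain j where "m = 2*j+1" by (metis oddE)
  then have "u - 1/2 = of_int j" using m by (simp add: field_simps)
  then show ?thesis by simp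
qed

lemma GL2Z_Mi: "Mi p q r s ** Mi p' q' r' s' = mat 1 \<Longrightarrow> Mi p' q' r' s' ** Mi p q r s = mat 1 \<Longrightarrow>
   GL2Z (Mi p q r s) \<and> matrix_inv (Mi p q r s) = Mi p' q' r' s'"
proof -
  assume h: "Mi p q r s ** Mi p' q' r' s' = mat 1" "Mi p' q' r' s' ** Mi p q r s = mat 1"
  then have "matrix_inv (Mi p q r s) = Mi p' q' r' s'" by (rule inv_unique)
  moreover have "invertible (Mi p q r s)" using h unfolding invertible_def by blast
  ultimately show ?thesis unfolding GL2Z_def using int_Mi by simp
qed


lemma Aff_torus: "\<psi> \<in> Aff \<Longrightarrow> p \<in> torus \<Longrightarrow> \<psi> p \<in> torus"
proof -
  assume "\<psi> \<in> Aff" "p \<in> torus"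
  then obtain a A where "\<psi> = aff_star a A" "GL2Z A" unfolding Aff_def by blast
  then show ?thesis using aff_torus[OF _ \<open>p \<in> torus\<close>, of A a] unfolding GL2Z_def by simp
qed

lemma fix_transfer:
  assumes c1: "aff_conj \<kappa> \<phi>1" and c2: "aff_conj \<kappa> \<phi>2" and p0: "p0 \<in> torus" "\<phi>1 p0 = p0"
    and T: "\<forall>p\<in>torus. \<phi>2 p \<in> torus"
  shows "\<exists>q\<in>torus. \<phi>2 q = q"
proof -
  obtain \<psi>1 \<psi>1' where h1c: "\<psi>1 \<in> Aff \<and> \<psi>1' \<in> Aff \<and> (\<forall>p\<in>torus. \<psi>1' (\<psi>1 p) = p \<and> \<psi>1 (\<psi>1' p) = p) \<and>
    (\<forall>p\<in>torus. \<kappa> p = \<psi>1 (\<phi>1 (\<psi>1' p)))" using c1 unfolding aff_conj_def by (elim exE) (rule that)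
  obtain \<psi>2 \<psi>2' where h2c: "\<psi>2 \<in> Aff \<and> \<psi>2' \<in> Aff \<and> (\<forall>p\<in>torus. \<psi>2' (\<psi>2 p) = p \<and> \<psi>2 (\<psi>2' p) = p) \<and>
    (\<forall>p\<in>torus. \<kappa> p = \<psi>2 (\<phi>2 (\<psi>2' p)))" using c2 unfolding aff_conj_def by (elim exE) (rule that)
  note h1 = conjunct1[OF h1c] conjunct1[OF conjunct2[OF h1c]] conjunct1[OF conjunct2[OF conjunct2[OF h1c]]] conjunct2[OF conjunct2[OF conjunct2[OF h1c]]]
  note h2 = conjunct1[OF h2c] conjunct1[OF conjunct2[OF h2c]] conjunct1[OF conjunct2[OF conjunct2[OF h2c]]] conjunct2[OF conjunct2[OF conjunct2[OF h2c]]]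
  define r where "r = \<psi>1 p0"
  have r: "r \<in> torus" unfolding r_def using Aff_torus[OF h1(1) p0(1)] .
  define q where "q = \<psi>2' r"
  have q: "q \<in> torus" unfolding q_def using Aff_torus[OF h2(2) r] .
  have "\<kappa> r = r" using h1 p0 r unfolding r_def by simp
  moreover have "\<kappa> r = \<psi>2 (\<phi>2 q)" using h2 r unfolding q_def by simp
  ultimately have "\<psi>2 (\<phi>2 q) = \<psi>2 q" using h2 r unfolding q_def by simp
  then have "\<psi>2' (\<psi>2 (\<phi>2 q)) = \<psi>2' (\<psi>2 q)" by simp
  then have "\<phi>2 q = q" using h2(3) q T by simp
  then show ?thesis using q by (intro bexI)
qed

lemma intA: "int_matrix mA" by (simp add: mA_Mi int_Mi)
lemma intC: "int_matrix mC" by (simp add: mC_Mi int_Mi)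

lemma A_fix: "aff_star 0 mA (tpt 0) = tpt 0"
  using aff_tpt[OF intA] by simp

lemma A2_nofix: "p \<in> torus \<Longrightarrow> aff_star ((1/2) *\<^sub>R e2) mA p \<noteq> p"
proof
  assume p: "p \<in> torus" and e: "aff_star ((1/2) *\<^sub>R e2) mA p = p"
  obtain x where x: "p = tpt x" using p by (rule torusE)
  have "tpt ((1/2) *\<^sub>R e2 + mA *v x) = tpt x" using e aff_tpt[OF intA] x by simp
  then have "(1/2) *\<^sub>R e2 + mA *v x - x \<in> latt" by (simp add: tpt_eq)
  then have "(1/2::real) \<in> \<int>" unfolding latt_iff by (simp add: mv_entry mA_e e2_def axis_def)
  then obtain m where "(1/2::real) = of_int m" by (metis Ints_cases)
  then have "1 = 2 * real_of_int m" by simp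
  then have "1 = 2 * m" by (metis of_int_1 of_int_eq_iff of_int_mult of_int_numeral)
  then show False by presburger
qed

lemma part3:
  assumes P: "GL2Z P" and KK: "K = P ** mA ** matrix_inv P" and o: "aff_order2 (aff_star k K)"
  shows "aff_conj (aff_star k K) (aff_star 0 mA) \<noteq> aff_conj (aff_star k K) (aff_star ((1/2) *\<^sub>R e2) mA)"
proof -
  define k' where "k' = matrix_inv P *v k"
  have l: "k' + mA *v k' \<in> latt" using order2_conj[OF o P KK intA] unfolding k'_def .
  then have h2: "2 * k'$2 \<in> \<int>" unfolding latt_iff by (simp add: mv_entry mA_e)
  define s where "s = (vector [k'$1 / 2, 0] :: real^2)"
  have ex: "aff_conj (aff_star k K) (aff_star 0 mA) \<or> aff_conj (aff_star k K) (aff_star ((1/2) *\<^sub>R e2) mA)"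
  proof (cases "k'$2 \<in> \<int>")
    case True
    have "k' - 0 - s + mA *v s \<in> latt" unfolding latt_iff s_def using True by (simp add: mv_entry mA_e)
    from conj2[OF P intA KK this[unfolded k'_def]] show ?thesis by (rule disjI1)
  next
    case False
    have "k'$2 - 1/2 \<in> \<int>" using half_int[OF h2 False] .
    then have "k' - (1/2) *\<^sub>R e2 - s + mA *v s \<in> latt" unfolding latt_iff s_def
      by (simp add: mv_entry mA_e e2_def axis_def)
    from conj2[OF P intA KK this[unfolded k'_def]] show ?thesis by (rule disjI2)
  qed
  have T: "\<forall>p\<in>torus. aff_star ((1/2) *\<^sub>R e2) mA p \<in> torus" using aff_torus[OF intA] by simp
  have nb: "\<not> (aff_conj (aff_star k K) (aff_star 0 mA) \<and> aff_conj (aff_star k K) (aff_star ((1/2) *\<^sub>R e2) mA))"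
  proof
    assume H: "aff_conj (aff_star k K) (aff_star 0 mA) \<and> aff_conj (aff_star k K) (aff_star ((1/2) *\<^sub>R e2) mA)"
    obtain q where "q \<in> torus" "aff_star ((1/2) *\<^sub>R e2) mA q = q"
      using fix_transfer[OF conjunct1[OF H] conjunct2[OF H] tpt_torus A_fix T] by blast
    then show False using A2_nofix by blast
  qed
  show ?thesis using ex nb by blast
qed

lemma part4:
  assumes P: "GL2Z P" and KK: "K = P ** mC ** matrix_inv P" and o: "aff_order2 (aff_star k K)"
  shows "aff_conj (aff_star k K) (aff_star 0 mC)"
proof -
  define k' where "k' = matrix_inv P *v k"
  have l: "k' + mC *v k' \<in> latt" using order2_conj[OF o P KK intC] unfolding k'_def .
  then have h2: "k'$1 + k'$2 \<in> \<int>" unfolding latt_iff by (simp add: mv_entry mC_e)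
  define s where "s = (vector [k'$1, 0] :: real^2)"
  have "k' - 0 - s + mC *v s \<in> latt" unfolding latt_iff s_def using h2 by (simp add: mv_entry mC_e add.commute)
  from conj2[OF P intC KK this[unfolded k'_def]] show ?thesis .
qed

lemma part_fixed:
  assumes "mat_conj K X" "int_matrix X" "(mat 1 - X) ** Y = mat 1"
  shows "aff_conj (aff_star k K) (aff_star 0 X)"
proof -
  obtain P where "GL2Z P" "K = P ** X ** matrix_inv P" using assms(1) unfolding mat_conj_def by blast
  from conj_fixed[OF this(1) assms(2) this(2) assms(3)] show ?thesis .
qed

lemma part5: "mat_conj K ((mB ** mC) ** (mB ** mC)) \<Longrightarrow> aff_conj (aff_star k K) (aff_star 0 ((mB ** mC) ** (mB ** mC)))"
  by (rule part_fixed[where Y = "vector [vector [2/3, -1/3], vector [1/3, 1/3]]"])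
     (simp_all add: BC2_Mi int_Mi mat_eq2 mm_entry mat_def)

lemma part6: "mat_conj K (mA ** mC) \<Longrightarrow> aff_conj (aff_star k K) (aff_star 0 (mA ** mC))"
  by (rule part_fixed[where Y = "vector [vector [1/2, -1/2], vector [1/2, 1/2]]"])
     (simp_all add: AC_Mi int_Mi mat_eq2 mm_entry mat_def)

lemma part7: "mat_conj K (mB ** mC) \<Longrightarrow> aff_conj (aff_star k K) (aff_star 0 (mB ** mC))"
  by (rule part_fixed[where Y = "vector [vector [1, -1], vector [1, 0]]"])
     (simp_all add: BC_Mi int_Mi mat_eq2 mm_entry mat_def)

lemma part2: "K = - mat 1 \<Longrightarrow> aff_conj (aff_star k K) (aff_star 0 (- mat 1))"
proof -
  assume K: "K = - mat 1"
  have G: "GL2Z (Mi 1 0 0 1) \<and> matrix_inv (Mi 1 0 0 1) = Mi 1 0 0 1"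
    by (rule GL2Z_Mi) (simp_all add: Mi_mult mat1_Mi)
  have "mat_conj K (- mat 1)" unfolding mat_conj_def
    by (rule exI[of _ "Mi 1 0 0 1"]) (use G K in \<open>simp add: mat1_Mi[symmetric]\<close>)
  then show ?thesis
  proof (rule part_fixed[where Y = "(vector [vector [1/2, 0], vector [0, 1/2]] :: real^2^2)"])
    show "int_matrix (- mat 1)" by (simp only: negI_Mi int_Mi)
    show "(mat 1 - - mat 1) ** (vector [vector [1/2, 0], vector [0, 1/2]] :: real^2^2) = mat 1"
      by (simp add: mat_eq2 mm_entry mat_def)
  qed
qed


lemma int1: "int_matrix (mat 1)" by (simp only: mat1_Mi int_Mi)

lemma part1_case:
  assumes G: "Mi p q r s ** Mi p' q' r' s' = mat 1" "Mi p' q' r' s' ** Mi p q r s = mat 1"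
    and L: "Mi p' q' r' s' *v k - (1/2) *\<^sub>R e1 \<in> latt"
  shows "aff_conj (aff_star k (mat 1)) (aff_star ((1/2) *\<^sub>R e1) (mat 1))"
proof -
  have g: "GL2Z (Mi p q r s)" "matrix_inv (Mi p q r s) = Mi p' q' r' s'" using GL2Z_Mi[OF G] by auto
  have KK: "mat 1 = Mi p q r s ** mat 1 ** matrix_inv (Mi p q r s)" using g(2) G(1) by simp
  have "matrix_inv (Mi p q r s) *v k - (1/2) *\<^sub>R e1 - 0 + mat 1 *v 0 \<in> latt" using L g(2) by simp
  from conj2[OF g(1) int1 KK this] show ?thesis .
qed

lemma part1:
  assumes o: "aff_order2 (aff_star k (mat 1))"
  shows "aff_star k (mat 1) \<in> K2 \<and> aff_conj (aff_star k (mat 1)) (aff_star ((1/2) *\<^sub>R e1) (mat 1))"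
proof -
  have l: "k + mat 1 *v k \<in> latt" by (rule order2_latt[OF o int1])
  then have h: "2 * k$1 \<in> \<int>" "2 * k$2 \<in> \<int>" unfolding latt_iff by simp_all
  have nk: "k \<notin> latt"
  proof
    assume kl: "k \<in> latt"
    have "aff_star k (mat 1) p = p" if hp: "p \<in> torus" for p
    proof -
      obtain x where x: "p = tpt x" using hp by (rule torusE)
      have "(k + x) - x \<in> latt" using kl by simp
      then show ?thesis using x aff_tpt[OF int1] by (simp add: tpt_eq)
    qed
    then show False using o unfolding aff_order2_def by blast
  qed
  have e1c: "e1$1 = 1" "e1$2 = 0" "e2$1 = 0" "e2$2 = 1" by (simp_all add: e1_def e2_def axis_def)
  consider (a) "k$1 \<notin> \<int>" "k$2 \<in> \<int>" | (b) "k$1 \<in> \<int>" "k$2 \<notin> \<int>" | (c) "k$1 \<notin> \<int>" "k$2 \<notin> \<int>"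
    using nk unfolding latt_iff by blast
  then show ?thesis
  proof cases
    case a
    have hh: "k$1 - 1/2 \<in> \<int>" using half_int[OF h(1) a(1)] .
    have "k - (1/2) *\<^sub>R e1 \<in> latt" unfolding latt_iff using hh a e1c by simp
    then have eq: "aff_star k (mat 1) = aff_star ((1/2) *\<^sub>R e1) (mat 1)" using aff_cong int1 by blast
    have c: "aff_conj (aff_star k (mat 1)) (aff_star ((1/2) *\<^sub>R e1) (mat 1))"
      by (rule part1_case[of 1 0 0 1 1 0 0 1]) (use hh a e1c in \<open>simp_all add: Mi_mult mat1_Mi latt_iff mv_entry\<close>)
    show ?thesis using eq c unfolding K2_def by simp
  next
    case b
    have hh: "k$2 - 1/2 \<in> \<int>" using half_int[OF h(2) b(2)] .
    have "k - (1/2) *\<^sub>R e2 \<in> latt" unfolding latt_iff using hh b e1c by simp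
    then have eq: "aff_star k (mat 1) = aff_star ((1/2) *\<^sub>R e2) (mat 1)" using aff_cong int1 by blast
    have c: "aff_conj (aff_star k (mat 1)) (aff_star ((1/2) *\<^sub>R e1) (mat 1))"
      by (rule part1_case[of 0 1 1 0 0 1 1 0]) (use hh b e1c in \<open>simp_all add: Mi_mult mat1_Mi latt_iff mv_entry\<close>)
    show ?thesis using eq c unfolding K2_def by simp
  next
    case c
    have hh: "k$1 - 1/2 \<in> \<int>" "k$2 - 1/2 \<in> \<int>" using half_int[OF h(1) c(1)] half_int[OF h(2) c(2)] by auto
    have d: "k$2 - k$1 \<in> \<int>" using Ints_diff[OF hh(2) hh(1)] by simp
    have "k - ((1/2) *\<^sub>R e1 + (1/2) *\<^sub>R e2) \<in> latt" unfolding latt_iff using hh e1c by simp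
    then have eq: "aff_star k (mat 1) = aff_star ((1/2) *\<^sub>R e1 + (1/2) *\<^sub>R e2) (mat 1)" using aff_cong int1 by blast
    have cc: "aff_conj (aff_star k (mat 1)) (aff_star ((1/2) *\<^sub>R e1) (mat 1))"
      by (rule part1_case[of 1 0 1 1 1 0 "-1" 1]) (use hh d e1c in \<open>simp_all add: Mi_mult mat1_Mi latt_iff mv_entry\<close>)
    show ?thesis using eq cc unfolding K2_def by simp
  qed
qed

theorem lemma32:
  fixes k :: "real^2" and K :: "real^2^2" and \<kappa> :: "(real^2) set \<Rightarrow> (real^2) set"
  assumes "GL2Z K" and "\<kappa> = aff_star k K"
    and "\<exists>n>0. mpow K n = mat 1"
  shows "card {i. i < 7 \<and> mat_conj K ([mat 1, - mat 1, mA, mC, (mB ** mC) ** (mB ** mC), mA ** mC, mB ** mC] ! i)} = 1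
    \<and> (K = mat 1 \<and> aff_order2 \<kappa> \<longrightarrow> \<kappa> \<in> K2 \<and> aff_conj \<kappa> (aff_star ((1/2) *\<^sub>R e1) (mat 1)))
    \<and> (K = - mat 1 \<longrightarrow> aff_conj \<kappa> (aff_star 0 (- mat 1)))
    \<and> (mat_conj K mA \<and> aff_order2 \<kappa> \<longrightarrow>
         (aff_conj \<kappa> (aff_star 0 mA) \<noteq> aff_conj \<kappa> (aff_star ((1/2) *\<^sub>R e2) mA)))
    \<and> (mat_conj K mC \<and> aff_order2 \<kappa> \<longrightarrow> aff_conj \<kappa> (aff_star 0 mC))
    \<and> (mat_conj K ((mB ** mC) ** (mB ** mC)) \<longrightarrow> aff_conj \<kappa> (aff_star 0 ((mB ** mC) ** (mB ** mC))))
    \<and> (mat_conj K (mA ** mC) \<longrightarrow> aff_conj \<kappa> (aff_star 0 (mA ** mC)))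
    \<and> (mat_conj K (mB ** mC) \<longrightarrow> aff_conj \<kappa> (aff_star 0 (mB ** mC)))"
proof (intro conjI impI)
  show "card {i. i < 7 \<and> mat_conj K ([mat 1, - mat 1, mA, mC, (mB ** mC) ** (mB ** mC), mA ** mC, mB ** mC] ! i)} = 1"
    by (rule part0[OF assms(1) assms(3)])
next
  assume H: "K = mat 1 \<and> aff_order2 \<kappa>"
  then have K1: "K = mat 1" and o: "aff_order2 (aff_star k (mat 1))" using assms(2) by auto
  show "\<kappa> \<in> K2" using part1[OF o] assms(2) K1 by simp
next
  assume H: "K = mat 1 \<and> aff_order2 \<kappa>"
  then have K1: "K = mat 1" and o: "aff_order2 (aff_star k (mat 1))" using assms(2) by auto
  show "aff_conj \<kappa> (aff_star ((1/2) *\<^sub>R e1) (mat 1))" using part1[OF o] assms(2) K1 by simp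
next
  assume "K = - mat 1"
  then show "aff_conj \<kappa> (aff_star 0 (- mat 1))" using part2[of K k] assms(2) by simp
next
  assume H: "mat_conj K mA \<and> aff_order2 \<kappa>"
  then obtain P where P: "GL2Z P" "K = P ** mA ** matrix_inv P" unfolding mat_conj_def by blast
  show "aff_conj \<kappa> (aff_star 0 mA) \<noteq> aff_conj \<kappa> (aff_star ((1/2) *\<^sub>R e2) mA)"
    using part3[OF P] H assms(2) by simp
next
  assume H: "mat_conj K mC \<and> aff_order2 \<kappa>"
  then obtain P where P: "GL2Z P" "K = P ** mC ** matrix_inv P" unfolding mat_conj_def by blast
  show "aff_conj \<kappa> (aff_star 0 mC)"
    using part4[OF P] H assms(2) by simp
next
  assume "mat_conj K ((mB ** mC) ** (mB ** mC))"
  then show "aff_conj \<kappa> (aff_star 0 ((mB ** mC) ** (mB ** mC)))" using part5 assms(2) by simp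
next
  assume "mat_conj K (mA ** mC)"
  then show "aff_conj \<kappa> (aff_star 0 (mA ** mC))" using part6 assms(2) by simp
next
  assume "mat_conj K (mB ** mC)"
  then show "aff_conj \<kappa> (aff_star 0 (mB ** mC))" using part7 assms(2) by simp
qed

end
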